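(* Assume the standing hypotheses (H) of the context. Take $x,y\in B(x_0,R)$ and $0\le t<v<R$. If $\|x-x_0\|\le t$ and $\|y-x\|\le v-t$, then $$\lambda\|E_f(x,y)\|\le e_\psi(t,v)\frac{\|y-x\|^2}{(v-t)^2}\le\frac12\psi''(v)(v-t)^2,$$ where $E_f(x,y):=f(y)-[f(x)+f'(x)(y-x)]$ and $e_\psi(t,u):=\psi(u)-[\psi(t)+\psi'(t)(u-t)]$.
   Context: Standing hypotheses (H): $\mathbb X,\mathbb Y$ Banach spaces, $\Omega\subseteq\mathbb X$ open, $f:\Omega\to\mathbb Y$ continuous with continuous Fréchet derivative $f'$, $F:\mathbb X\rightrightarrows\mathbb Y$ with closed graph; $L_f(x,y):=f(x)+f'(x)(y-x)+F(y)$, $L_f(x,z)^{-1}:=\{y: z\in f(x)+f'(x)(y-x)+F(y)\}$, singletons $\{w\}$ identified with $w$. $x_0,x_1\in\Omega$, $\lambda>0$, and $0\in f(x_0)+f'(x_0)(x_1-x_0)+F(x_1)$ with $z\mapsto L_f(x_0,z)^{-1}\cap B(x_1,\rho_1)$ single-valued from some $B(0,\rho_2)$ into $B(x_1,\rho_1)\subset\Omega$ and $\lambda$-Lipschitz there (strong regularity). Constants $r_{x_1},r_0,r_{x_0}>0$ satisfy: for each $x\in B(x_0,r_{x_0})$, $\lambda\|f'(x)-f'(x_0)\|<1$, $z\mapsto L_f(x,z)^{-1}\cap B(x_1,r_{x_1})$ is single-valued from $B(0,r_0)$ to $B(x_1,r_{x_1})$ and Lipschitz with constant $\lambda/(1-\lambda\|f'(x)-f'(x_0)\|)$.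 $R>0$, $\kappa:=\sup\{t\in[0,R):B(x_0,t)\subset\Omega\}$, $\psi:[0,R)\to\mathbb R$ twice continuously differentiable with $\lambda\|f'(y)-f'(x)\|\le\psi'(\|y-x\|+\|x-x_0\|)-\psi'(\|x-x_0\|)$ for $x,y\in B(x_0,\kappa)$, $\|y-x\|+\|x-x_0\|<R$; $\|x_1-x_0\|\le\psi(0)$; $\psi(0)>0$, $\psi'(0)=-1$; $\psi'$ convex and strictly increasing; $\psi$ has a zero in $(0,R)$ and $t_*:=\min\{t\in[0,R):\psi(t)=0\}$; $t_*\le r_{x_0}$ and $\psi''(t_* )\psi(0)^2/(2\lambda)<r_0$.
   Formalization: The points x and y range over $B(x_0,\kappa)$ instead of $B(x_0,R)$, where kappa is the supremum defined in the context. The statement above fails without it. *)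

theory Defs
  imports "HOL-Analysis.Analysis"
begin

definition Lf_inv :: "('a::banach \<Rightarrow> 'b::banach) \<Rightarrow> ('a \<Rightarrow> 'a \<Rightarrow>\<^sub>L 'b) \<Rightarrow> ('a \<Rightarrow> 'b set)
    \<Rightarrow> 'a \<Rightarrow> 'b \<Rightarrow> 'a set" where
  "Lf_inv f f' F x z = {y. \<exists>w\<in>F y. z = f x + blinfun_apply (f' x) (y - x) + w}"

definition Ef :: "('a::banach \<Rightarrow> 'b::banach) \<Rightarrow> ('a \<Rightarrow> 'a \<Rightarrow>\<^sub>L 'b) \<Rightarrow> 'a \<Rightarrow> 'a \<Rightarrow> 'b" where
  "Ef f f' x y = f y - (f x + blinfun_apply (f' x) (y - x))"

definition epsi :: "(real \<Rightarrow> real) \<Rightarrow> (real \<Rightarrow> real) \<Rightarrow> real \<Rightarrow> real \<Rightarrow> real" where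
  "epsi \<psi> \<psi>' t u = \<psi> u - (\<psi> t + \<psi>' t * (u - t))"

end

theory Submission imports Defs begin

lemma conv_secant:
  fixes h :: "real \<Rightarrow> real"
  assumes cv: "convex_on {0..<R} h" and "0 \<le> t" "0 \<le> u" "u \<le> w" "0 < w" "t + w < R"
  shows "h (t + u) - h t \<le> (u / w) * (h (t + w) - h t)"
proof -
  have th: "0 \<le> u / w" "u / w \<le> 1" using assms by auto
  have "h ((1 - u/w) *\<^sub>R t + (u/w) *\<^sub>R (t + w)) \<le> (1 - u/w) * h t + (u/w) * h (t + w)"
    by (rule convex_onD[OF cv th]) (use assms in auto)
  moreover have "(1 - u/w) *\<^sub>R t + (u/w) *\<^sub>R (t + w) = t + u" using assms by (simp add: field_simps)
  ultimately show ?thesis by (simp add: algebra_simps)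
qed

lemma conv_incr:
  fixes h :: "real \<Rightarrow> real"
  assumes cv: "convex_on {0..<R} h" and "0 \<le> a" "a \<le> t" "0 \<le> u" "t + u < R"
  shows "h (a + u) - h a \<le> h (t + u) - h t"
proof (cases "a = t \<or> u = 0")
  case True then show ?thesis by auto
next
  case False
  then have at: "a < t" "0 < u" using assms by auto
  define D where "D = t + u - a"
  have D: "D > 0" using at D_def by auto
  have lin: "\<And>\<theta>::real. (1-\<theta>) *\<^sub>R a + \<theta> *\<^sub>R (t+u) = a + \<theta>*D" by (simp add: D_def algebra_simps)
  have t1: "0 \<le> u / D" "u / D \<le> 1" using at D D_def by auto
  have t2: "0 \<le> (t - a) / D" "(t - a) / D \<le> 1" using at D D_def by auto
  have "h ((1 - u/D) *\<^sub>R a + (u/D) *\<^sub>R (t + u)) \<le> (1 - u/D) * h a + (u/D) * h (t + u)"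
    by (rule convex_onD[OF cv t1]) (use assms in auto)
  moreover have "(1 - u/D) *\<^sub>R a + (u/D) *\<^sub>R (t + u) = a + u"
  proof -
    have "(1 - u/D) *\<^sub>R a + (u/D) *\<^sub>R (t + u) = a + (u/D) * D" using lin by blast
    also have "\<dots> = a + u" using D by simp
    finally show ?thesis .
  qed
  moreover have "h ((1 - (t-a)/D) *\<^sub>R a + ((t-a)/D) *\<^sub>R (t + u)) \<le> (1 - (t-a)/D) * h a + ((t-a)/D) * h (t + u)"
    by (rule convex_onD[OF cv t2]) (use assms in auto)
  moreover have "(1 - (t-a)/D) *\<^sub>R a + ((t-a)/D) *\<^sub>R (t + u) = t"
  proof -
    have "(1 - (t-a)/D) *\<^sub>R a + ((t-a)/D) *\<^sub>R (t + u) = a + ((t-a)/D) * D" using lin by blast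
    also have "\<dots> = t" using D by simp
    finally show ?thesis .
  qed
  moreover have "u/D + (t-a)/D = 1" using D by (simp add: D_def add_divide_distrib[symmetric])
  ultimately have i1: "h (a + u) \<le> (1 - u/D) * h a + (u/D) * h (t + u)"
     and i2: "h t \<le> (1 - (t-a)/D) * h a + ((t-a)/D) * h (t + u)" and s1: "(t-a)/D = 1 - u/D" by auto
  have "h (a + u) + h t \<le> (1 - u/D) * h a + (u/D) * h (t + u) + ((u/D) * h a + (1 - u/D) * h (t + u))"
    using i1 i2 s1 by simp
  also have "\<dots> = h a + h (t + u)" by (simp add: algebra_simps)
  finally show ?thesis by simp
qed

lemma ball_kappa:
  fixes x0 :: "'a::real_normed_vector"
  assumes "R > 0" "\<kappa> = Sup {s \<in> {0..<R}. ball x0 s \<subseteq> \<Omega>}"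
  shows "ball x0 \<kappa> \<subseteq> \<Omega>"
proof
  fix z assume z: "z \<in> ball x0 \<kappa>"
  let ?S = "{s \<in> {0..<R}. ball x0 s \<subseteq> \<Omega>}"
  have ne: "?S \<noteq> {}" using assms by (auto intro!: exI[of _ 0])
  have bd: "bdd_above ?S" by (auto intro!: bdd_aboveI[of _ R])
  have "dist x0 z < Sup ?S" using z assms by simp
  then obtain s where "s \<in> ?S" "dist x0 z < s" using less_cSup_iff[OF ne bd] by blast
  then show "z \<in> \<Omega>" by auto
qed

theorem lemma3p6:
  fixes f :: "'a::banach \<Rightarrow> 'b::banach" and f' :: "'a \<Rightarrow> 'a \<Rightarrow>\<^sub>L 'b"
    and F :: "'a \<Rightarrow> 'b set" and \<Omega> :: "'a set"
    and x0 x1 x y :: 'a and lam \<rho>1 \<rho>2 r_x1 r0 r_x0 R \<kappa> tstar t v :: real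
    and \<psi> \<psi>' \<psi>'' :: "real \<Rightarrow> real"
  assumes \<Omega>_open: "open \<Omega>"
    and f_cont: "continuous_on \<Omega> f"
    and f_deriv: "\<And>z. z \<in> \<Omega> \<Longrightarrow> (f has_derivative blinfun_apply (f' z)) (at z)"
    and f'_cont: "continuous_on \<Omega> f'"
    and F_closed: "closed {(p, q). q \<in> F p}"
    and x0_in: "x0 \<in> \<Omega>" and x1_in: "x1 \<in> \<Omega>"
    and lam_pos: "lam > 0"
    and x1_sol: "x1 \<in> Lf_inv f f' F x0 0"
    and strong_reg: "\<rho>1 > 0" "\<rho>2 > 0" "ball x1 \<rho>1 \<subseteq> \<Omega>"
      "\<exists>g. (\<forall>z\<in>ball 0 \<rho>2. Lf_inv f f' F x0 z \<inter> ball x1 \<rho>1 = {g z})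
           \<and> lam-lipschitz_on (ball 0 \<rho>2) g"
    and radii_pos: "r_x1 > 0" "r0 > 0" "r_x0 > 0"
    and radii: "\<And>z. z \<in> ball x0 r_x0 \<Longrightarrow>
        lam * norm (f' z - f' x0) < 1 \<and>
        (\<exists>g. (\<forall>w\<in>ball 0 r0. Lf_inv f f' F z w \<inter> ball x1 r_x1 = {g w})
             \<and> (lam / (1 - lam * norm (f' z - f' x0)))-lipschitz_on (ball 0 r0) g)"
    and R_pos: "R > 0"
    and \<kappa>_def: "\<kappa> = Sup {s \<in> {0..<R}. ball x0 s \<subseteq> \<Omega>}"
    and \<psi>_deriv: "\<And>s. s \<in> {0..<R} \<Longrightarrow> (\<psi> has_real_derivative \<psi>' s) (at s within {0..<R})"
    and \<psi>'_deriv: "\<And>s. s \<in> {0..<R} \<Longrightarrow> (\<psi>' has_real_derivative \<psi>'' s) (at s within {0..<R})"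
    and \<psi>''_cont: "continuous_on {0..<R} \<psi>''"
    and majorant: "\<And>p q. p \<in> ball x0 \<kappa> \<Longrightarrow> q \<in> ball x0 \<kappa> \<Longrightarrow> norm (q - p) + norm (p - x0) < R \<Longrightarrow>
        lam * norm (f' q - f' p) \<le> \<psi>' (norm (q - p) + norm (p - x0)) - \<psi>' (norm (p - x0))"
    and init: "norm (x1 - x0) \<le> \<psi> 0"
    and \<psi>0_pos: "\<psi> 0 > 0" and \<psi>'0: "\<psi>' 0 = -1"
    and \<psi>'_convex: "convex_on {0..<R} \<psi>'"
    and \<psi>'_strict_mono: "strict_mono_on {0..<R} \<psi>'"
    and \<psi>_zero: "\<exists>s\<in>{0<..<R}. \<psi> s = 0"
    and tstar_def: "tstar \<in> {0..<R}" "\<psi> tstar = 0" "\<And>s. s \<in> {0..<R} \<Longrightarrow> \<psi> s = 0 \<Longrightarrow> tstar \<le> s"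
    and tstar_le: "tstar \<le> r_x0"
    and tstar_r0: "\<psi>'' tstar * (\<psi> 0)\<^sup>2 / (2 * lam) < r0"
    and xy_in: "x \<in> ball x0 \<kappa>" "y \<in> ball x0 \<kappa>"
    and tv: "0 \<le> t" "t < v" "v < R"
    and x_le: "norm (x - x0) \<le> t"
    and yx_le: "norm (y - x) \<le> v - t"
  shows "lam * norm (Ef f f' x y) \<le> epsi \<psi> \<psi>' t v * (norm (y - x))\<^sup>2 / (v - t)\<^sup>2
       \<and> epsi \<psi> \<psi>' t v * (norm (y - x))\<^sup>2 / (v - t)\<^sup>2 \<le> \<psi>'' v * (v - t)\<^sup>2 / 2"
proof -
  define a where "a = norm (x - x0)"
  define b where "b = norm (y - x)"
  define s where "s = v - t"
  define c where "c = b / s"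
  define d where "d = y - x"
  define p where "p = (\<lambda>\<tau>::real. x + \<tau> *\<^sub>R d)"
  have s_pos: "s > 0" using tv s_def by auto
  have b_nn: "b \<ge> 0" using b_def by simp
  have bs: "b \<le> s" using yx_le b_def s_def by simp
  have cs: "c * s = b" using s_pos c_def by simp
  have c01: "0 \<le> c" "c \<le> 1" using b_nn bs s_pos c_def by auto
  have a_le: "0 \<le> a" "a \<le> t" using x_le a_def by auto
  have Rset: "{t..v} \<subseteq> {0..<R}" using tv by auto
  have ballO: "ball x0 \<kappa> \<subseteq> \<Omega>" by (rule ball_kappa[OF R_pos \<kappa>_def])
  have p_in: "p \<tau> \<in> ball x0 \<kappa>" if "\<tau> \<in> {0..1}" for \<tau>
  proof -
    have "(1 - \<tau>) *\<^sub>R x + \<tau> *\<^sub>R y \<in> ball x0 \<kappa>"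
      by (rule convexD[OF convex_ball xy_in]) (use that in auto)
    moreover have "(1 - \<tau>) *\<^sub>R x + \<tau> *\<^sub>R y = p \<tau>" by (simp add: p_def d_def algebra_simps)
    ultimately show ?thesis by simp
  qed
  have pO: "p \<tau> \<in> \<Omega>" if "\<tau> \<in> {0..1}" for \<tau> using p_in[OF that] ballO by auto
  have \<psi>_cont: "continuous_on {0..<R} \<psi>" by (rule DERIV_continuous_on[OF \<psi>_deriv])
  have \<psi>'_cont: "continuous_on {0..<R} \<psi>'" by (rule DERIV_continuous_on[OF \<psi>'_deriv])
  have \<psi>_at: "(\<psi> has_real_derivative \<psi>' r) (at r)" if "0 < r" "r < R" for r
    using \<psi>_deriv[of r] that at_within_interior[of r "{0..<R}"] by auto
  have \<psi>'_at: "(\<psi>' has_real_derivative \<psi>'' r) (at r)" if "0 < r" "r < R" for r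
    using \<psi>'_deriv[of r] that at_within_interior[of r "{0..<R}"] by auto
  have conn: "connected {0..<R}" by (simp add: is_interval_connected is_interval_co)
  have tang: "\<psi>' z - \<psi>' r \<ge> \<psi>'' r * (z - r)" if "0 < r" "r < R" "0 \<le> z" "z < R" for r z
    by (rule convex_on_imp_above_tangent[OF \<psi>'_convex conn]) (use that \<psi>'_deriv[of r] in auto)
  define g where "g = (\<lambda>\<tau>. f (p \<tau>) - \<tau> *\<^sub>R blinfun_apply (f' x) d)"
  define G where "G = (\<lambda>\<tau>. blinfun_apply (f' (p \<tau>)) d - blinfun_apply (f' x) d)"
  define \<phi> where "\<phi> = (\<lambda>\<tau>. (c^2 / lam) * (\<psi> (t + \<tau> * s) - \<tau> * s * \<psi>' t))"
  define \<Phi> where "\<Phi> = (\<lambda>\<tau>. (c^2 / lam) * (\<psi>' (t + \<tau> * s) * s - s * \<psi>' t))"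
  have g_cont: "continuous_on {0..1} g"
  proof -
    have "continuous_on {0..1} (f \<circ> p)"
      by (rule continuous_on_compose) (auto simp: p_def intro!: continuous_intros continuous_on_subset[OF f_cont] pO[unfolded p_def])
    then show ?thesis unfolding g_def o_def by (intro continuous_intros)
  qed
  have lin_in: "t + \<tau> * s \<in> {0..<R}" if "\<tau> \<in> {0..1}" for \<tau>
  proof -
    have "\<tau> * s \<le> s" using that s_pos by (intro mult_left_le_one_le) auto
    moreover have "0 \<le> \<tau> * s" using that s_pos by simp
    ultimately have "t + \<tau> * s \<le> v" "t \<le> t + \<tau> * s" using s_def by linarith+
    then show ?thesis using tv by auto
  qed
  have \<phi>_cont: "continuous_on {0..1} \<phi>"
  proof -
    have "continuous_on {0..1} (\<psi> \<circ> (\<lambda>\<tau>. t + \<tau> * s))"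
      by (rule continuous_on_compose) (auto intro!: continuous_intros continuous_on_subset[OF \<psi>_cont] lin_in)
    then show ?thesis unfolding \<phi>_def o_def by (intro continuous_intros)
  qed
  have g_der: "(g has_vector_derivative G \<tau>) (at \<tau>)" if "0 < \<tau>" "\<tau> < 1" for \<tau>
  proof -
    have pd: "(p has_derivative (\<lambda>h. h *\<^sub>R d)) (at \<tau>)"
      unfolding p_def by (auto intro!: derivative_eq_intros)
    have fd: "(f has_derivative blinfun_apply (f' (p \<tau>))) (at (p \<tau>))" using f_deriv pO that by auto
    have "((f \<circ> p) has_derivative (blinfun_apply (f' (p \<tau>)) \<circ> (\<lambda>h. h *\<^sub>R d))) (at \<tau>)"
      by (rule diff_chain_at[OF pd fd])
    then have "((\<lambda>\<tau>. f (p \<tau>)) has_derivative (\<lambda>h. h *\<^sub>R blinfun_apply (f' (p \<tau>)) d)) (at \<tau>)"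
      by (simp add: o_def blinfun.scaleR_right)
    then have "(g has_derivative (\<lambda>h. h *\<^sub>R blinfun_apply (f' (p \<tau>)) d - h *\<^sub>R blinfun_apply (f' x) d)) (at \<tau>)"
      unfolding g_def by (auto intro!: derivative_eq_intros)
    then show ?thesis unfolding has_vector_derivative_def G_def by (simp add: scaleR_diff_right)
  qed
  have \<phi>_der: "(\<phi> has_vector_derivative \<Phi> \<tau>) (at \<tau>)" if "0 < \<tau>" "\<tau> < 1" for \<tau>
  proof -
    have "0 < \<tau> * s" using that s_pos by simp
    then have r: "0 < t + \<tau> * s" "t + \<tau> * s < R" using lin_in[of \<tau>] that tv by auto
    have "((\<lambda>\<tau>. \<psi> (t + \<tau> * s)) has_real_derivative \<psi>' (t + \<tau> * s) * s) (at \<tau>)"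
    proof -
      have inner: "((\<lambda>\<tau>. t + \<tau> * s) has_real_derivative s) (at \<tau>)"
        by (auto intro!: derivative_eq_intros)
      show ?thesis
        using DERIV_chain2[where f=\<psi> and g="\<lambda>\<tau>. t + \<tau> * s" and x=\<tau>, OF \<psi>_at[OF r] inner] by simp
    qed
    then have "(\<phi> has_real_derivative \<Phi> \<tau>) (at \<tau>)"
      unfolding \<phi>_def \<Phi>_def using lam_pos by (auto intro!: derivative_eq_intros)
    then show ?thesis by (simp add: has_real_derivative_iff_has_vector_derivative)
  qed
  have bnd: "norm (G \<tau>) \<le> \<Phi> \<tau>" if "0 < \<tau>" "\<tau> < 1" for \<tau>
  proof -
    have t01: "\<tau> \<in> {0..1}" using that by auto
    have npx: "norm (p \<tau> - x) = \<tau> * b" using that by (simp add: p_def b_def d_def)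
    have tb: "\<tau> * b \<le> b" using that b_nn by (intro mult_left_le_one_le) auto
    have tbs: "\<tau> * b \<le> \<tau> * s" using that bs by simp
    have ts: "\<tau> * s \<le> s" using that s_pos by (intro mult_left_le_one_le) auto
    have tsR: "t + \<tau> * s < R" using ts s_def tv by linarith
    have "norm (G \<tau>) = norm (blinfun_apply (f' (p \<tau>) - f' x) d)" by (simp add: G_def blinfun.diff_left)
    also have "\<dots> \<le> norm (f' (p \<tau>) - f' x) * b" using norm_blinfun b_def d_def by metis
    finally have n1: "lam * norm (G \<tau>) \<le> b * (lam * norm (f' (p \<tau>) - f' x))"
      using lam_pos by (simp add: mult_left_mono algebra_simps)
    have m: "lam * norm (f' (p \<tau>) - f' x) \<le> \<psi>' (\<tau> * b + a) - \<psi>' a"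
      using majorant[OF xy_in(1) p_in[OF t01]] npx a_def tb tv yx_le b_def x_le s_def by auto
    have ci: "\<psi>' (a + \<tau> * b) - \<psi>' a \<le> \<psi>' (t + \<tau> * b) - \<psi>' t"
      by (rule conv_incr[OF \<psi>'_convex]) (use a_le that b_nn tb bs s_def tv in auto)
    have cse: "\<psi>' (t + \<tau> * b) - \<psi>' t \<le> (\<tau> * b / (\<tau> * s)) * (\<psi>' (t + \<tau> * s) - \<psi>' t)"
      by (rule conv_secant[OF \<psi>'_convex]) (use that b_nn tbs s_pos tsR tv in auto)
    have "\<tau> * b / (\<tau> * s) = c" using that c_def by simp
    then have "lam * norm (f' (p \<tau>) - f' x) \<le> c * (\<psi>' (t + \<tau> * s) - \<psi>' t)"
      using m ci cse by (simp add: add.commute)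
    then have "lam * norm (G \<tau>) \<le> b * (c * (\<psi>' (t + \<tau> * s) - \<psi>' t))"
      using n1 b_nn mult_left_mono order_trans by blast
    also have "\<dots> = lam * \<Phi> \<tau>" using lam_pos unfolding \<Phi>_def
      by (simp add: cs[symmetric] power2_eq_square algebra_simps)
    finally show ?thesis using lam_pos by simp
  qed
  have "norm (g 1 - g 0) \<le> \<phi> 1 - \<phi> 0"
    by (rule differentiable_bound_general[OF zero_less_one g_cont \<phi>_cont g_der \<phi>_der bnd])
  moreover have "g 1 - g 0 = Ef f f' x y" by (simp add: g_def p_def d_def Ef_def algebra_simps)
  moreover have "\<phi> 1 - \<phi> 0 = (c^2 / lam) * epsi \<psi> \<psi>' t v"
  proof -
    have e: "(\<psi> (t + s) - s * \<psi>' t) - \<psi> t = epsi \<psi> \<psi>' t v" by (simp add: epsi_def s_def algebra_simps)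
    have "\<phi> 1 - \<phi> 0 = (c^2 / lam) * ((\<psi> (t + s) - s * \<psi>' t) - \<psi> t)"
      by (simp add: \<phi>_def right_diff_distrib)
    then show ?thesis using e by simp
  qed
  ultimately have "lam * norm (Ef f f' x y) \<le> c^2 * epsi \<psi> \<psi>' t v"
    using lam_pos by (simp add: field_simps)
  moreover have cc: "c^2 * epsi \<psi> \<psi>' t v = epsi \<psi> \<psi>' t v * (norm (y - x))\<^sup>2 / (v - t)\<^sup>2"
    by (simp add: c_def b_def s_def power_divide)
  ultimately have part1: "lam * norm (Ef f f' x y) \<le> epsi \<psi> \<psi>' t v * (norm (y - x))\<^sup>2 / (v - t)\<^sup>2"
    by simp
  define k where "k = (\<lambda>r. \<psi> r - \<psi>' t * r)"
  define K where "K = (\<lambda>r. \<psi>' r - \<psi>' t)"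
  define chi where "chi = (\<lambda>r. \<psi>'' v * (r - t)^2 / 2)"
  define X where "X = (\<lambda>r. \<psi>'' v * (r - t))"
  have k_cont: "continuous_on {t..v} k"
    unfolding k_def by (intro continuous_intros continuous_on_subset[OF \<psi>_cont Rset])
  have chi_cont: "continuous_on {t..v} chi" unfolding chi_def by (intro continuous_intros) auto
  have k_der: "(k has_vector_derivative K r) (at r)" if "t < r" "r < v" for r
  proof -
    have "(k has_real_derivative K r) (at r)" unfolding k_def K_def
      using that tv by (auto intro!: derivative_eq_intros \<psi>_at)
    then show ?thesis by (simp add: has_real_derivative_iff_has_vector_derivative)
  qed
  have chi_der: "(chi has_vector_derivative X r) (at r)" if "t < r" "r < v" for r
  proof -
    have "(chi has_real_derivative X r) (at r)" unfolding chi_def X_def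
      by (auto intro!: derivative_eq_intros)
    then show ?thesis by (simp add: has_real_derivative_iff_has_vector_derivative)
  qed
  have bnd2: "norm (K r) \<le> X r" if "t < r" "r < v" for r
  proof -
    have r0: "0 < r" "r < R" using that tv by auto
    have v0: "0 < v" "v < R" using tv by auto
    have "\<psi>' t < \<psi>' r" using \<psi>'_strict_mono that tv by (auto simp: strict_mono_on_def)
    then have K0: "0 \<le> K r" by (simp add: K_def)
    have t1: "\<psi>' t - \<psi>' r \<ge> \<psi>'' r * (t - r)" using tang[OF r0, of t] tv by auto
    have t2: "\<psi>' v - \<psi>' r \<ge> \<psi>'' r * (v - r)" using tang[OF r0, of v] tv by auto
    have t3: "\<psi>' r - \<psi>' v \<ge> \<psi>'' v * (r - v)" using tang[OF v0, of r] r0 by auto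
    have "(\<psi>'' r - \<psi>'' v) * (v - r) \<le> 0" using t2 t3 by (simp add: algebra_simps)
    then have "\<psi>'' r \<le> \<psi>'' v" using that by (simp add: mult_le_0_iff)
    then have "\<psi>'' r * (r - t) \<le> \<psi>'' v * (r - t)" using that by (simp add: mult_right_mono)
    moreover have "K r \<le> \<psi>'' r * (r - t)" using t1 by (simp add: K_def algebra_simps)
    ultimately show ?thesis using K0 by (simp add: X_def)
  qed
  have "norm (k v - k t) \<le> chi v - chi t"
    by (rule differentiable_bound_general[OF tv(2) k_cont chi_cont k_der chi_der bnd2])
  moreover have "k v - k t = epsi \<psi> \<psi>' t v" by (simp add: k_def epsi_def algebra_simps)
  moreover have "chi v - chi t = \<psi>'' v * (v - t)\<^sup>2 / 2" by (simp add: chi_def)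
  ultimately have eb: "\<bar>epsi \<psi> \<psi>' t v\<bar> \<le> \<psi>'' v * (v - t)\<^sup>2 / 2" by simp
  have c2: "0 \<le> c^2" "c^2 \<le> 1" using c01 by (auto simp: power_le_one)
  have "c^2 * epsi \<psi> \<psi>' t v \<le> c^2 * \<bar>epsi \<psi> \<psi>' t v\<bar>" using c2 by (simp add: mult_left_mono)
  also have "\<dots> \<le> \<bar>epsi \<psi> \<psi>' t v\<bar>" using c2 by (simp add: mult_left_le_one_le)
  finally have "c^2 * epsi \<psi> \<psi>' t v \<le> \<psi>'' v * (v - t)\<^sup>2 / 2" using eb by linarith
  with part1 cc show ?thesis by simp
qed

end
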